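(* Let $\Sigma=(\sigma_0,\sigma_\infty,\sigma_1,\tau)$ be a special admissible 4-tuple in $S_{2n}^4$ such that $\sigma_1\tau$ is a product of $n-4$ disjoint transpositions and a disjoint 4-cycle. Then there exist integers $1\le h<k_1<k_2<2n-h$ with $h\equiv k_1\equiv k_2\pmod2$ such that $\sigma_0=\prod_{i=1}^{h}(i,2n+1-i)\prod_{j=1}^{(k_1-h)/2}(h+j,k_1+1-j)\prod_{t=1}^{(k_2-k_1)/2}(k_1+t,k_2+1-t)\prod_{v=1}^{(2n-h-k_2)/2}(k_2+v,2n-h+1-v)$ and $\sigma_1\tau=\prod_{i=1}^{h-1}(i,2n-i)\prod_{j=1}^{(k_1-h)/2-1}(h+j,k_1-j)\prod_{t=1}^{(k_2-k_1)/2-1}(k_1+t,k_2-t)\prod_{v=1}^{(2n-h-k_2)/2-1}(k_2+v,2n-h-v)\cdot(2n-h,\,h,\,k_1,\,k_2)$. In particular $\sigma_1\tau$ fixes exactly the indices $2n$, $(k_1+h)/2$, $(k_1+k_2)/2$, $(2n-h+k_2)/2$. Moreover, for each such $(h,k_1,k_2)$ there are exactly two special tuples with these $\sigma_0$ and $\sigma_1\tau$, corresponding to $\tau\in\{(h,k_2),(k_1,2n-h)\}$.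
   Context: Permutation products are read left to right ($\sigma\sigma'$: first $\sigma$, then $\sigma'$); $(a,b,c,e)$ denotes the cycle $a\mapsto b\mapsto c\mapsto e\mapsto a$. An admissible 4-tuple is $(\sigma_0,\sigma_\infty,\sigma_1,\tau)\in S_{2n}^4$ with $\sigma_0$ a product of $n$ disjoint transpositions, $\sigma_\infty$ a $2n$-cycle, $\sigma_1$ a product of $n-2$ disjoint transpositions, $\tau$ a transposition, and $\sigma_0\sigma_\infty\sigma_1\tau=\mathrm{id}$. It is special if $\sigma_\infty=(2n,2n-1,\dots,1)$ and $\sigma_1(2n)=\tau(2n)=2n$. *)

theory Defs
  imports "HOL-Combinatorics.Combinatorics"
begin

text \<open>Permutations of the index set {1..2n} are functions nat => nat fixing every point
outside {1..2n}.  Products are read left to right.\<close>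

definition pmul :: "(nat \<Rightarrow> nat) \<Rightarrow> (nat \<Rightarrow> nat) \<Rightarrow> (nat \<Rightarrow> nat)" where
  "pmul s t = t \<circ> s"

definition idx :: "nat \<Rightarrow> nat set" where
  "idx n = {1..2*n}"

definition tlist_prod :: "(nat \<times> nat) list \<Rightarrow> nat \<Rightarrow> nat" where
  "tlist_prod ps = foldr (\<lambda>(a,b) f. pmul f (transpose a b)) ps id"

definition disj_transp_prod :: "nat set \<Rightarrow> nat \<Rightarrow> (nat \<Rightarrow> nat) \<Rightarrow> bool" where
  "disj_transp_prod S m s \<longleftrightarrow>
     (\<exists>ps. length ps = m \<and> distinct (concat (map (\<lambda>(a,b). [a,b]) ps))
          \<and> set (concat (map (\<lambda>(a,b). [a,b]) ps)) \<subseteq> S \<and> s = tlist_prod ps)"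

text \<open>s is a cycle through all elements of S (cycle_of_list [a,b,c] is a -> b -> c -> a).\<close>
definition full_cycle :: "nat set \<Rightarrow> (nat \<Rightarrow> nat) \<Rightarrow> bool" where
  "full_cycle S s \<longleftrightarrow> (\<exists>cs. distinct cs \<and> set cs = S \<and> s = cycle_of_list cs)"

definition is_transposition :: "nat set \<Rightarrow> (nat \<Rightarrow> nat) \<Rightarrow> bool" where
  "is_transposition S t \<longleftrightarrow> (\<exists>a\<in>S. \<exists>b\<in>S. a \<noteq> b \<and> t = transpose a b)"

definition admissible ::
  "nat \<Rightarrow> (nat \<Rightarrow> nat) \<times> (nat \<Rightarrow> nat) \<times> (nat \<Rightarrow> nat) \<times> (nat \<Rightarrow> nat) \<Rightarrow> bool" where
  "admissible n T \<longleftrightarrow> (case T of (s0, sinf, s1, t) \<Rightarrow>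
      2 \<le> n \<and>
      disj_transp_prod (idx n) n s0 \<and> full_cycle (idx n) sinf \<and>
      disj_transp_prod (idx n) (n - 2) s1 \<and> is_transposition (idx n) t \<and>
      pmul (pmul (pmul s0 sinf) s1) t = id)"

definition sigma_inf_std :: "nat \<Rightarrow> nat \<Rightarrow> nat" where
  "sigma_inf_std n = cycle_of_list (rev [1..<2*n+1])"

definition special ::
  "nat \<Rightarrow> (nat \<Rightarrow> nat) \<times> (nat \<Rightarrow> nat) \<times> (nat \<Rightarrow> nat) \<times> (nat \<Rightarrow> nat) \<Rightarrow> bool" where
  "special n T \<longleftrightarrow> admissible n T \<and> (case T of (s0, sinf, s1, t) \<Rightarrow>
      sinf = sigma_inf_std n \<and> s1 (2*n) = 2*n \<and> t (2*n) = 2*n)"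

definition transp_and_4cycle :: "nat set \<Rightarrow> nat \<Rightarrow> (nat \<Rightarrow> nat) \<Rightarrow> bool" where
  "transp_and_4cycle S m s \<longleftrightarrow> 4 \<le> m \<and>
     (\<exists>ps a b c e. length ps = m - 4 \<and>
        distinct (concat (map (\<lambda>(x,y). [x,y]) ps) @ [a,b,c,e]) \<and>
        set (concat (map (\<lambda>(x,y). [x,y]) ps) @ [a,b,c,e]) \<subseteq> S \<and>
        s = pmul (tlist_prod ps) (cycle_of_list [a,b,c,e]))"

definition tprod :: "nat \<Rightarrow> (nat \<Rightarrow> nat) \<Rightarrow> (nat \<Rightarrow> nat) \<Rightarrow> nat \<Rightarrow> nat" where
  "tprod m f g = tlist_prod (map (\<lambda>j. (f j, g j)) [1..<m+1])"

definition sigma0_form :: "nat \<Rightarrow> nat \<Rightarrow> nat \<Rightarrow> nat \<Rightarrow> nat \<Rightarrow> nat" where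
  "sigma0_form n h k1 k2 =
     pmul (pmul (pmul
       (tprod h (\<lambda>i. i) (\<lambda>i. 2*n + 1 - i))
       (tprod ((k1 - h) div 2) (\<lambda>j. h + j) (\<lambda>j. k1 + 1 - j)))
       (tprod ((k2 - k1) div 2) (\<lambda>t. k1 + t) (\<lambda>t. k2 + 1 - t)))
       (tprod ((2*n - h - k2) div 2) (\<lambda>v. k2 + v) (\<lambda>v. 2*n - h + 1 - v))"

definition s1tau_form :: "nat \<Rightarrow> nat \<Rightarrow> nat \<Rightarrow> nat \<Rightarrow> nat \<Rightarrow> nat" where
  "s1tau_form n h k1 k2 =
     pmul (pmul (pmul (pmul
       (tprod (h - 1) (\<lambda>i. i) (\<lambda>i. 2*n - i))
       (tprod ((k1 - h) div 2 - 1) (\<lambda>j. h + j) (\<lambda>j. k1 - j)))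
       (tprod ((k2 - k1) div 2 - 1) (\<lambda>t. k1 + t) (\<lambda>t. k2 - t)))
       (tprod ((2*n - h - k2) div 2 - 1) (\<lambda>v. k2 + v) (\<lambda>v. 2*n - h - v)))
       (cycle_of_list [2*n - h, h, k1, k2])"

definition valid_triple :: "nat \<Rightarrow> nat \<Rightarrow> nat \<Rightarrow> nat \<Rightarrow> bool" where
  "valid_triple n h k1 k2 \<longleftrightarrow> 1 \<le> h \<and> h < k1 \<and> k1 < k2 \<and> k2 < 2*n - h \<and>
     h mod 2 = k1 mod 2 \<and> k1 mod 2 = k2 mod 2"

end

theory Submission
  imports Defs
begin

definition flt :: "(nat \<times> nat) list \<Rightarrow> nat list" where
  "flt ps = concat (map (\<lambda>(a,b). [a,b]) ps)"

lemma flt_simps[simp]: "flt [] = []" "flt ((a,b)#ps) = a # b # flt ps"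
  "flt (xs @ ys) = flt xs @ flt ys"
  by (auto simp: flt_def)

lemma length_flt[simp]: "length (flt ps) = 2 * length ps"
  by (induction ps) (auto simp: flt_def)

lemma tl_Cons: "tlist_prod ((a,b)#ps) x = transpose a b (tlist_prod ps x)"
  by (simp add: tlist_prod_def pmul_def)

lemma tl_Nil[simp]: "tlist_prod [] x = x"
  by (simp add: tlist_prod_def)

lemma tl_append: "tlist_prod (xs @ ys) x = tlist_prod xs (tlist_prod ys x)"
  by (induction xs) (auto simp: tl_Cons)

lemma tl_out: "x \<notin> set (flt ps) \<Longrightarrow> tlist_prod ps x = x"
  by (induction ps) (auto simp: tl_Cons)

lemma tl_pair: "distinct (flt ps) \<Longrightarrow> (a,b) \<in> set ps \<Longrightarrow> tlist_prod ps a = b \<and> tlist_prod ps b = a"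
proof (induction ps)
  case Nil then show ?case by simp
next
  case (Cons p ps)
  obtain c d where p: "p = (c,d)" by (cases p)
  show ?case
  proof (cases "(a,b) = (c,d)")
    case True
    then show ?thesis using Cons.prems p by (auto simp: tl_Cons tl_out transpose_def)
  next
    case False
    then have "(a,b) \<in> set ps" using Cons.prems p by auto
    moreover have "a \<in> set (flt ps)" "b \<in> set (flt ps)" using calculation
      by (auto simp: flt_def)
    ultimately show ?thesis using Cons p by (auto simp: tl_Cons transpose_def)
  qed
qed

lemma tl_in: "distinct (flt ps) \<Longrightarrow> x \<in> set (flt ps) \<Longrightarrow>
   tlist_prod ps x \<in> set (flt ps) \<and> tlist_prod ps x \<noteq> x \<and> tlist_prod ps (tlist_prod ps x) = x"
proof (induction ps)
  case Nil then show ?case by simp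
next
  case (Cons p ps)
  obtain c d where p: "p = (c,d)" by (cases p)
  show ?case
  proof (cases "x \<in> set (flt ps)")
    case True
    then show ?thesis using Cons p by (auto simp: tl_Cons transpose_def)
  next
    case False
    then show ?thesis using Cons.prems p by (auto simp: tl_Cons tl_out transpose_def)
  qed
qed

lemma tl_invol: "distinct (flt ps) \<Longrightarrow> tlist_prod ps (tlist_prod ps x) = x"
  by (metis tl_in tl_out)

definition rb :: "nat \<Rightarrow> nat \<Rightarrow> nat \<Rightarrow> (nat \<times> nat) list" where
  "rb p q m = map (\<lambda>j. (p+j, q+1-j)) [1..<m+1]"

lemma rb_Suc: "rb p q (Suc m) = rb p q m @ [(p + Suc m, q - m)]"
  by (simp add: rb_def)

lemma rb_set: "p + 2*m \<le> q \<Longrightarrow> set (flt (rb p q m)) = {p+1..p+m} \<union> {q+1-m..q}"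
proof (induction m)
  case 0 then show ?case by (simp add: rb_def)
next
  case (Suc m)
  then show ?case by (auto simp: rb_Suc)
qed

lemma rb_distinct: "p + 2*m \<le> q \<Longrightarrow> distinct (flt (rb p q m))"
proof (induction m)
  case 0 then show ?case by (simp add: rb_def)
next
  case (Suc m)
  then show ?case by (auto simp: rb_Suc rb_set)
qed

lemma rb_len[simp]: "length (rb p q m) = m" by (simp add: rb_def)

lemma rb_val:
  assumes "distinct (flt L)" "set (rb p q m) \<subseteq> set L" "p + 2*m \<le> q"
    "x \<in> {p+1..p+m} \<union> {q+1-m..q}"
  shows "tlist_prod L x = p + q + 1 - x"
proof (cases "x \<le> p + m")
  case True
  have "p+1 \<le> x" using assms(3,4) True by auto
  then have "(x, p+q+1-x) = (p + (x-p), q+1-(x-p))" "x - p \<in> set [1..<m+1]"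
    using True by auto
  then have "(x, p+q+1-x) \<in> set (rb p q m)"
    unfolding rb_def by (metis (no_types, lifting) image_eqI set_map)
  then show ?thesis using tl_pair assms by blast
next
  case False
  then have "(p+q+1-x, x) \<in> set (rb p q m)" using assms(3,4)
    unfolding rb_def by (auto intro!: image_eqI[where x="q+1-x"])
  then show ?thesis using tl_pair assms by blast
qed

lemma pmul_tl: "pmul (tlist_prod a) (tlist_prod b) = tlist_prod (b @ a)"
  by (auto simp: pmul_def tl_append)

lemma sinf_val:
  assumes "1 \<le> x" "x \<le> 2*n"
  shows "sigma_inf_std n x = (if x = 1 then 2*n else x - 1)"
proof -
  define cs where "cs = rev [1..<2*n+1]"
  have len: "length cs = 2*n" by (simp add: cs_def)
  have nth: "cs ! i = 2*n - i" if "i < 2*n" for i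
  proof -
    have "[1..<2*n+1] ! (2*n - Suc i) = 1 + (2*n - Suc i)"
      by (rule nth_upt) (use that in simp)
    moreover have "cs ! i = [1..<2*n+1] ! (length [1..<2*n+1] - Suc i)"
      unfolding cs_def by (rule rev_nth) (use that in simp)
    ultimately show ?thesis using that by simp
  qed
  have "map (cycle_of_list cs ^^ 1) cs = rotate 1 cs"
    by (rule cyclic_rotation) (simp add: cs_def)
  then have m: "map (cycle_of_list cs) cs = rotate1 cs" by simp
  define i where "i = 2*n - x"
  have i: "i < 2*n" using assms by (simp add: i_def)
  have "cycle_of_list cs (cs ! i) = rotate1 cs ! i"
    using arg_cong[OF m, of "\<lambda>l. l ! i"] i len by simp
  also have "\<dots> = cs ! (Suc i mod (2*n))" using nth_rotate1[of i cs] i len by simp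
  finally have "cycle_of_list cs x = cs ! (Suc i mod (2*n))"
    using nth[OF i] assms by (simp add: i_def)
  moreover have "cs ! (Suc i mod (2*n)) = (if x = 1 then 2*n else x - 1)"
  proof (cases "x = 1")
    case True
    then have "Suc i = 2*n" using assms by (simp add: i_def)
    then show ?thesis using True nth[of 0] assms by simp
  next
    case False
    then have "Suc i < 2*n" using assms by (simp add: i_def)
    then show ?thesis using False nth[of "Suc i"] assms by (simp add: i_def)
  qed
  ultimately show ?thesis by (simp add: sigma_inf_std_def cs_def)
qed

lemma sinf_out: "x \<notin> idx n \<Longrightarrow> sigma_inf_std n x = x"
  unfolding sigma_inf_std_def idx_def by (rule id_outside_supp) auto

lemma cyc4:
  assumes "distinct [a,b,c,e]"
  shows "cycle_of_list [a,b,c,e] a = b" "cycle_of_list [a,b,c,e] b = c"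
    "cycle_of_list [a,b,c,e] c = e" "cycle_of_list [a,b,c,e] e = a"
    "x \<notin> {a,b,c,e} \<Longrightarrow> cycle_of_list [a,b,c,e] x = x"
  using assms by (auto simp: transpose_def)

definition Mf :: "nat \<Rightarrow> nat \<Rightarrow> nat \<Rightarrow> nat \<Rightarrow> nat \<Rightarrow> nat" where
  "Mf n h k1 k2 y = (if y \<le> h \<or> 2*n-h < y then 2*n+1-y else if y \<le> k1 then h+1+k1-y
     else if y \<le> k2 then k1+1+k2-y else k2+1+2*n-h-y)"

definition Pf :: "nat \<Rightarrow> nat \<Rightarrow> nat \<Rightarrow> nat \<Rightarrow> nat \<Rightarrow> nat" where
  "Pf n h k1 k2 y = (if 1 \<le> y \<and> y < 2*n then Mf n h k1 k2 (y+1) else y)"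

lemma vt_expand:
  assumes "valid_triple n h k1 k2"
  obtains a b c where "k1 = h + 2*a" "k2 = h + 2*a + 2*b" "2*n = h + 2*a + 2*b + 2*c + h"
    "1 \<le> a" "1 \<le> b" "1 \<le> c" "1 \<le> h"
proof -
  from assms have v: "1 \<le> h" "h < k1" "k1 < k2" "k2 < 2*n - h" "h mod 2 = k1 mod 2" "k1 mod 2 = k2 mod 2"
    by (auto simp: valid_triple_def)
  have "\<exists>a. k1 = h + 2*a \<and> 1 \<le> a" using v(2,5) by presburger
  then obtain a where a: "k1 = h + 2*a" "1 \<le> a" by blast
  have "\<exists>b. k2 = k1 + 2*b \<and> 1 \<le> b" using v(3,6) by presburger
  then obtain b where b: "k2 = k1 + 2*b" "1 \<le> b" by blast
  have "\<exists>c. 2*n - h = k2 + 2*c \<and> 1 \<le> c" using v(4,5,6) by presburger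
  then obtain c where c: "2*n - h = k2 + 2*c" "1 \<le> c" by blast
  show ?thesis using that[of a b c] a b c v by linarith
qed


definition LS :: "nat \<Rightarrow> nat \<Rightarrow> nat \<Rightarrow> nat \<Rightarrow> (nat \<times> nat) list" where
  "LS n h k1 k2 = rb k2 (2*n-h) ((2*n-h-k2) div 2) @ rb k1 k2 ((k2-k1) div 2)
     @ rb h k1 ((k1-h) div 2) @ rb 0 (2*n) h"

definition LT :: "nat \<Rightarrow> nat \<Rightarrow> nat \<Rightarrow> nat \<Rightarrow> (nat \<times> nat) list" where
  "LT n h k1 k2 = rb k2 (2*n-h-1) ((2*n-h-k2) div 2 - 1) @ rb k1 (k2-1) ((k2-k1) div 2 - 1)
     @ rb h (k1-1) ((k1-h) div 2 - 1) @ rb 0 (2*n-1) (h-1)"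

lemma sigma0_list: "sigma0_form n h k1 k2 = tlist_prod (LS n h k1 k2)"
proof -
  have 1: "tprod h (\<lambda>i. i) (\<lambda>i. 2*n+1-i) = tlist_prod (rb 0 (2*n) h)"
    by (simp add: tprod_def rb_def)
  have 2: "tprod m (\<lambda>j. p+j) (\<lambda>j. q+1-j) = tlist_prod (rb p q m)" for m p q
    by (simp add: tprod_def rb_def)
  show ?thesis unfolding sigma0_form_def 1 2 pmul_tl LS_def by simp
qed

lemma s1tau_list: "s1tau_form n h k1 k2 = pmul (tlist_prod (LT n h k1 k2)) (cycle_of_list [2*n - h, h, k1, k2])"
proof -
  have 2: "tprod m (\<lambda>j. p+j) (\<lambda>j. q-j) = tlist_prod (rb p (q-1) m)" for m p q
    unfolding tprod_def rb_def by (rule arg_cong[where f=tlist_prod], rule map_cong) auto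
  have 1: "tprod m (\<lambda>i. i) (\<lambda>i. q-i) = tlist_prod (rb 0 (q-1) m)" for m q
    using 2[of m 0 q] by simp
  show ?thesis unfolding s1tau_form_def 1 2 pmul_tl LT_def by simp
qed

lemma LS_props:
  assumes "valid_triple n h k1 k2"
  shows "distinct (flt (LS n h k1 k2)) \<and> set (flt (LS n h k1 k2)) = idx n \<and> length (LS n h k1 k2) = n"
proof -
  obtain a b c where e: "k1 = h + 2*a" "k2 = h + 2*a + 2*b" "2*n = h + 2*a + 2*b + 2*c + h"
    "1 \<le> a" "1 \<le> b" "1 \<le> c" "1 \<le> h" using vt_expand[OF assms] by blast
  have d: "(2*n-h-k2) div 2 = c" "(k2-k1) div 2 = b" "(k1-h) div 2 = a" using e by auto
  have s1: "set (flt (rb 0 (2*n) h)) = {1..h} \<union> {2*n+1-h..2*n}" using e by (subst rb_set) auto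
  have s2: "set (flt (rb h k1 a)) = {h+1..k1}" using e by (subst rb_set) auto
  have s3: "set (flt (rb k1 k2 b)) = {k1+1..k2}" using e by (subst rb_set) auto
  have s4: "set (flt (rb k2 (2*n-h) c)) = {k2+1..2*n-h}" using e by (subst rb_set) auto
  have dd: "distinct (flt (rb 0 (2*n) h))" "distinct (flt (rb h k1 a))"
     "distinct (flt (rb k1 k2 b))" "distinct (flt (rb k2 (2*n-h) c))"
    using e by (auto intro!: rb_distinct)
  show ?thesis unfolding LS_def d using s1 s2 s3 s4 dd e
    by (auto simp: idx_def)
qed



lemma regions5:
  fixes x h u v g :: nat
  obtains "x < h" | "x = h" | "h < x" "x < u" | "x = u" | "u < x" "x < v" | "x = v"
    | "v < x" "x < g" | "x = g" | "g < x"
proof -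
  have A: "x < h \<or> x = h \<or> h < x" "x < u \<or> x = u \<or> u < x" "x < v \<or> x = v \<or> v < x"
    "x < g \<or> x = g \<or> g < x" by auto
  show ?thesis
    using A that by fast
qed

lemma block_val:
  assumes "distinct (flt L)" "set (rb p (p+2*m-1) (m-1)) \<subseteq> set L" "p+m \<notin> set (flt L)" "p < x" "x < p+2*m"
  shows "tlist_prod L x = 2*p+2*m-x"
proof -
  consider "x = p+m" | "x < p+m" | "p+m < x" by linarith
  then show ?thesis
  proof cases
    case 1 then show ?thesis using tl_out[OF assms(3)] by simp
  next
    case 2
    have "tlist_prod L x = p + (p+2*m-1) + 1 - x"
      by (rule rb_val[OF assms(1,2)]) (use 2 assms(4,5) in auto)
    then show ?thesis using assms(4,5) by simp
  next
    case 3
    have "tlist_prod L x = p + (p+2*m-1) + 1 - x"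
      by (rule rb_val[OF assms(1,2)]) (use 3 assms(4,5) in auto)
    then show ?thesis using assms(4,5) by simp
  qed
qed

lemma LT_props:
  assumes "valid_triple n h k1 k2"
  shows "distinct (flt (LT n h k1 k2)) \<and> set (flt (LT n h k1 k2)) \<subseteq> idx n \<and> length (LT n h k1 k2) = n - 4
    \<and> h \<notin> set (flt (LT n h k1 k2)) \<and> k1 \<notin> set (flt (LT n h k1 k2))
    \<and> k2 \<notin> set (flt (LT n h k1 k2)) \<and> 2*n-h \<notin> set (flt (LT n h k1 k2))
    \<and> (\<forall>x. tlist_prod (LT n h k1 k2) x =
         (if 1 \<le> x \<and> x < 2*n \<and> x \<notin> {h,k1,k2,2*n-h} then Mf n h k1 k2 (x+1) else x))"
proof -
  obtain a b c where e: "k1 = h + 2*a" "k2 = h + 2*a + 2*b" "2*n = h + 2*a + 2*b + 2*c + h"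
    "1 \<le> a" "1 \<le> b" "1 \<le> c" "1 \<le> h" using vt_expand[OF assms] by blast
  have d: "(2*n-h-k2) div 2 - 1 = c - 1" "(k2-k1) div 2 - 1 = b - 1" "(k1-h) div 2 - 1 = a - 1"
     "k1 - 1 = h + 2*a - 1" "k2 - 1 = k1 + 2*b - 1" "2*n-h-1 = k2 + 2*c - 1" using e by auto
  define Q1 where "Q1 = rb 0 (2*n-1) (h-1)"
  define Q2 where "Q2 = rb h (h+2*a-1) (a-1)"
  define Q3 where "Q3 = rb k1 (k1+2*b-1) (b-1)"
  define Q4 where "Q4 = rb k2 (k2+2*c-1) (c-1)"
  have L: "LT n h k1 k2 = Q4 @ Q3 @ Q2 @ Q1"
    unfolding LT_def d Q1_def Q2_def Q3_def Q4_def ..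
  have s1: "set (flt Q1) = {1..h-1} \<union> {2*n+1-h..2*n-1}" unfolding Q1_def using e by (subst rb_set) auto
  have s2: "set (flt Q2) = {h+1..h+a-1} \<union> {h+a+1..k1-1}" unfolding Q2_def using e by (subst rb_set) auto
  have s3: "set (flt Q3) = {k1+1..k1+b-1} \<union> {k1+b+1..k2-1}" unfolding Q3_def using e by (subst rb_set) auto
  have s4: "set (flt Q4) = {k2+1..k2+c-1} \<union> {k2+c+1..2*n-h-1}" unfolding Q4_def using e by (subst rb_set) auto
  have dd: "distinct (flt Q1)" "distinct (flt Q2)" "distinct (flt Q3)" "distinct (flt Q4)"
    unfolding Q1_def Q2_def Q3_def Q4_def using e by (auto intro!: rb_distinct)
  have r: "set (flt Q1) \<subseteq> {0<..<h} \<union> {2*n-h<..<2*n}"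
    "set (flt Q2) \<subseteq> {h<..<k1}" "set (flt Q3) \<subseteq> {k1<..<k2}"
    "set (flt Q4) \<subseteq> {k2<..<2*n-h}"
    unfolding s1 s2 s3 s4 using e by auto
  have dj: "({0<..<h} \<union> {2*n-h<..<2*n}) \<inter> {h<..<k1} = {}" "({0<..<h} \<union> {2*n-h<..<2*n}) \<inter> {k1<..<k2} = {}"
    "({0<..<h} \<union> {2*n-h<..<2*n}) \<inter> {k2<..<2*n-h} = {}" "{h<..<k1} \<inter> {k1<..<k2} = {}"
    "{h<..<k1} \<inter> {k2<..<2*n-h} = {}" "{k1<..<k2} \<inter> {k2<..<2*n-h} = {}"
    using e by auto
  have dist: "distinct (flt (LT n h k1 k2))" unfolding L flt_simps distinct_append set_append
    using dd r dj by blast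
  have sL: "set (flt (LT n h k1 k2)) = set (flt Q1) \<union> set (flt Q2) \<union> set (flt Q3) \<union> set (flt Q4)"
    unfolding L by auto
  have notin: "x \<notin> set (flt (LT n h k1 k2))" if "x = 0 \<or> 2*n \<le> x \<or> x = h \<or> x = k1 \<or> x = k2 \<or> x = 2*n-h"
     for x
  proof -
    have "x \<notin> {0<..<h} \<union> {2*n-h<..<2*n}" "x \<notin> {h<..<k1}" "x \<notin> {k1<..<k2}" "x \<notin> {k2<..<2*n-h}"
      using that e by auto
    then show ?thesis unfolding sL using r by blast
  qed
  have mids: "h+a \<notin> set (flt (LT n h k1 k2))" "k1+b \<notin> set (flt (LT n h k1 k2))" "k2+c \<notin> set (flt (LT n h k1 k2))"
  proof -
    have "h+a \<notin> {0<..<h} \<union> {2*n-h<..<2*n}" "h+a \<notin> {k1<..<k2}" "h+a \<notin> {k2<..<2*n-h}" "h+a \<notin> set (flt Q2)"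
      unfolding s2 using e by auto
    then show "h+a \<notin> set (flt (LT n h k1 k2))" unfolding sL using r by blast
    have "k1+b \<notin> {0<..<h} \<union> {2*n-h<..<2*n}" "k1+b \<notin> {h<..<k1}" "k1+b \<notin> {k2<..<2*n-h}" "k1+b \<notin> set (flt Q3)"
      unfolding s3 using e by auto
    then show "k1+b \<notin> set (flt (LT n h k1 k2))" unfolding sL using r by blast
    have "k2+c \<notin> {0<..<h} \<union> {2*n-h<..<2*n}" "k2+c \<notin> {h<..<k1}" "k2+c \<notin> {k1<..<k2}" "k2+c \<notin> set (flt Q4)"
      unfolding s4 using e by auto
    then show "k2+c \<notin> set (flt (LT n h k1 k2))" unfolding sL using r by blast
  qed
  have sub: "set Q1 \<subseteq> set (LT n h k1 k2)" "set Q2 \<subseteq> set (LT n h k1 k2)"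
      "set Q3 \<subseteq> set (LT n h k1 k2)" "set Q4 \<subseteq> set (LT n h k1 k2)"
      unfolding L by auto
  have len: "length (LT n h k1 k2) = n - 4" unfolding L Q1_def Q2_def Q3_def Q4_def using e by simp
  have val: "tlist_prod (LT n h k1 k2) x =
         (if 1 \<le> x \<and> x < 2*n \<and> x \<notin> {h,k1,k2,2*n-h} then Mf n h k1 k2 (x+1) else x)" for x
  proof (cases rule: regions5[where x=x and h=h and u=k1 and v=k2 and g="2*n-h"])
    case 1
    show ?thesis
    proof (cases "x = 0")
      case True then show ?thesis using tl_out notin by auto
    next
      case False
      have "tlist_prod (LT n h k1 k2) x = 0 + (2*n-1) + 1 - x"
        by (rule rb_val[OF dist sub(1)[unfolded Q1_def]]) (use 1 False e in auto)
      then show ?thesis using 1 False e by (auto simp: Mf_def)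
    qed
  next
    case 2 then show ?thesis using tl_out notin by auto
  next
    case 3
    have "tlist_prod (LT n h k1 k2) x = 2*h+2*a-x"
      by (rule block_val[OF dist sub(2)[unfolded Q2_def] mids(1)]) (use 3 e in auto)
    then show ?thesis using 3 e by (auto simp: Mf_def)
  next
    case 4 then show ?thesis using tl_out notin by auto
  next
    case 5
    have "tlist_prod (LT n h k1 k2) x = 2*k1+2*b-x"
      by (rule block_val[OF dist sub(3)[unfolded Q3_def] mids(2)]) (use 5 e in auto)
    then show ?thesis using 5 e by (auto simp: Mf_def)
  next
    case 6 then show ?thesis using tl_out notin by auto
  next
    case 7
    have "tlist_prod (LT n h k1 k2) x = 2*k2+2*c-x"
      by (rule block_val[OF dist sub(4)[unfolded Q4_def] mids(3)]) (use 7 e in auto)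
    then show ?thesis using 7 e by (auto simp: Mf_def)
  next
    case 8 then show ?thesis using tl_out notin by auto
  next
    case 9
    show ?thesis
    proof (cases "2*n \<le> x")
      case True then show ?thesis using tl_out notin by auto
    next
      case False
      have "tlist_prod (LT n h k1 k2) x = 0 + (2*n-1) + 1 - x"
        by (rule rb_val[OF dist sub(1)[unfolded Q1_def]]) (use 9 False e in auto)
      then show ?thesis using 9 False e by (auto simp: Mf_def)
    qed
  qed
  have "set (flt (LT n h k1 k2)) \<subseteq> idx n" unfolding sL using r e by (auto simp: idx_def)
  then show ?thesis using dist len val notin by blast
qed


lemma s0_pt:
  assumes "valid_triple n h k1 k2"
  shows "sigma0_form n h k1 k2 x = (if x \<in> idx n then Mf n h k1 k2 x else x)"
proof -
  obtain a b c where e: "k1 = h + 2*a" "k2 = h + 2*a + 2*b" "2*n = h + 2*a + 2*b + 2*c + h"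
    "1 \<le> a" "1 \<le> b" "1 \<le> c" "1 \<le> h" using vt_expand[OF assms] by blast
  have d: "(2*n-h-k2) div 2 = c" "(k2-k1) div 2 = b" "(k1-h) div 2 = a" using e by auto
  have L: "LS n h k1 k2 = rb k2 (2*n-h) c @ rb k1 k2 b @ rb h k1 a @ rb 0 (2*n) h"
    unfolding LS_def d ..
  have P: "distinct (flt (LS n h k1 k2))" "set (flt (LS n h k1 k2)) = idx n"
    using LS_props[OF assms] by auto
  have sub: "set (rb 0 (2*n) h) \<subseteq> set (LS n h k1 k2)" "set (rb h k1 a) \<subseteq> set (LS n h k1 k2)"
      "set (rb k1 k2 b) \<subseteq> set (LS n h k1 k2)" "set (rb k2 (2*n-h) c) \<subseteq> set (LS n h k1 k2)"
    unfolding L by auto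
  show ?thesis
  proof (cases "x \<in> idx n")
    case False
    then show ?thesis using P tl_out by (simp add: sigma0_list)
  next
    case True
    then have x: "1 \<le> x" "x \<le> 2*n" by (auto simp: idx_def)
    consider "x \<le> h \<or> 2*n-h < x" | "h < x \<and> x \<le> k1" | "k1 < x \<and> x \<le> k2" | "k2 < x \<and> x \<le> 2*n-h"
      using e by (cases rule: regions5[where x=x and h=h and u=k1 and v=k2 and g="2*n-h"]) auto
    then show ?thesis
    proof cases
      case 1
      have "tlist_prod (LS n h k1 k2) x = 0 + 2*n + 1 - x"
        by (rule rb_val[OF P(1) sub(1)]) (use 1 x e in auto)
      then show ?thesis using True 1 e by (auto simp: Mf_def sigma0_list)
    next
      case 2
      have "tlist_prod (LS n h k1 k2) x = h + k1 + 1 - x"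
        by (rule rb_val[OF P(1) sub(2)]) (use 2 e in auto)
      then show ?thesis using True 2 e by (auto simp: Mf_def sigma0_list)
    next
      case 3
      have "tlist_prod (LS n h k1 k2) x = k1 + k2 + 1 - x"
        by (rule rb_val[OF P(1) sub(3)]) (use 3 e in auto)
      then show ?thesis using True 3 e by (auto simp: Mf_def sigma0_list)
    next
      case 4
      have "tlist_prod (LS n h k1 k2) x = k2 + (2*n-h) + 1 - x"
        by (rule rb_val[OF P(1) sub(4)]) (use 4 e in auto)
      then show ?thesis using True 4 e by (auto simp: Mf_def sigma0_list)
    qed
  qed
qed

lemma s1_pt:
  assumes "valid_triple n h k1 k2"
  shows "s1tau_form n h k1 k2 x = Pf n h k1 k2 x"
proof -
  obtain a b c where e: "k1 = h + 2*a" "k2 = h + 2*a + 2*b" "2*n = h + 2*a + 2*b + 2*c + h"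
    "1 \<le> a" "1 \<le> b" "1 \<le> c" "1 \<le> h" using vt_expand[OF assms] by blast
  have dc: "distinct [2*n-h, h, k1, k2]" using e by auto
  note P = LT_props[OF assms]
  have "s1tau_form n h k1 k2 x = cycle_of_list [2*n-h, h, k1, k2] (tlist_prod (LT n h k1 k2) x)"
    by (simp add: s1tau_list pmul_def)
  also have "\<dots> = Pf n h k1 k2 x"
  proof (cases "1 \<le> x \<and> x < 2*n \<and> x \<notin> {h,k1,k2,2*n-h}")
    case True
    then have t: "tlist_prod (LT n h k1 k2) x = Mf n h k1 k2 (x+1)" using P by auto
    have "Mf n h k1 k2 (x+1) \<notin> {2*n-h, h, k1, k2}"
      using True e by (cases rule: regions5[where x=x and h=h and u=k1 and v=k2 and g="2*n-h"]) (auto simp: Mf_def)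
    then show ?thesis using True t cyc4(5)[OF dc] by (auto simp: Pf_def)
  next
    case False
    then have t: "tlist_prod (LT n h k1 k2) x = x" using P by auto
    show ?thesis
    proof (cases "x \<in> {h,k1,k2,2*n-h}")
      case True
      then show ?thesis using t cyc4[OF dc] e by (auto simp: Pf_def Mf_def)
    next
      case F2: False
      then show ?thesis using t cyc4(5)[OF dc] False by (auto simp: Pf_def Mf_def)
    qed
  qed
  finally show ?thesis .
qed



lemma odd_dest: "Suc m - x = (x::nat) \<Longrightarrow> odd m" by presburger

lemma Mf_props:
  assumes "valid_triple n h k1 k2" "x \<in> idx n"
  shows "Mf n h k1 k2 x \<in> idx n \<and> Mf n h k1 k2 (Mf n h k1 k2 x) = x \<and> Mf n h k1 k2 x \<noteq> x"
proof -
  obtain a b c where e: "k1 = h + 2*a" "k2 = h + 2*a + 2*b" "2*n = h + 2*a + 2*b + 2*c + h"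
    "1 \<le> a" "1 \<le> b" "1 \<le> c" "1 \<le> h" using vt_expand[OF assms(1)] by blast
  have x: "1 \<le> x" "x \<le> 2*n" using assms(2) by (auto simp: idx_def)
  show ?thesis
    using x e
    by (cases rule: regions5[where x=x and h=h and u=k1 and v=k2 and g="2*n-h"])
      (auto simp: Mf_def idx_def dest: odd_dest)
qed

lemma Pf_C:
  assumes "valid_triple n h k1 k2"
  shows "Pf n h k1 k2 h = k1" "Pf n h k1 k2 k1 = k2" "Pf n h k1 k2 k2 = 2*n-h" "Pf n h k1 k2 (2*n-h) = h"
    "x \<notin> {h,k1,k2,2*n-h} \<Longrightarrow> Pf n h k1 k2 x \<notin> {h,k1,k2,2*n-h} \<and> Pf n h k1 k2 (Pf n h k1 k2 x) = x"
proof -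
  obtain a b c where e: "k1 = h + 2*a" "k2 = h + 2*a + 2*b" "2*n = h + 2*a + 2*b + 2*c + h"
    "1 \<le> a" "1 \<le> b" "1 \<le> c" "1 \<le> h" using vt_expand[OF assms(1)] by blast
  show "Pf n h k1 k2 h = k1" "Pf n h k1 k2 k1 = k2" "Pf n h k1 k2 k2 = 2*n-h" "Pf n h k1 k2 (2*n-h) = h"
    using e by (auto simp: Pf_def Mf_def)
  assume "x \<notin> {h,k1,k2,2*n-h}"
  then show "Pf n h k1 k2 x \<notin> {h,k1,k2,2*n-h} \<and> Pf n h k1 k2 (Pf n h k1 k2 x) = x"
    using e by (cases rule: regions5[where x=x and h=h and u=k1 and v=k2 and g="2*n-h"])
      (auto simp: Pf_def Mf_def)
qed

lemma fixset:
  assumes "valid_triple n h k1 k2"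
  shows "{x \<in> idx n. Pf n h k1 k2 x = x} = {2*n, (k1 + h) div 2, (k1 + k2) div 2, (2*n - h + k2) div 2}"
proof -
  obtain a b c where e: "k1 = h + 2*a" "k2 = h + 2*a + 2*b" "2*n = h + 2*a + 2*b + 2*c + h"
    "1 \<le> a" "1 \<le> b" "1 \<le> c" "1 \<le> h" using vt_expand[OF assms(1)] by blast
  have d: "(k1 + h) div 2 = h + a" "(k1 + k2) div 2 = k1 + b" "(2*n - h + k2) div 2 = k2 + c" using e by auto
  have "x \<in> idx n \<and> Pf n h k1 k2 x = x \<longleftrightarrow> x = 2*n \<or> x = h+a \<or> x = k1+b \<or> x = k2+c" for x
    using e by (cases rule: regions5[where x=x and h=h and u=k1 and v=k2 and g="2*n-h"])
      (auto simp: Pf_def Mf_def idx_def)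
  then show ?thesis unfolding d by auto
qed

lemma comp_id:
  assumes "valid_triple n h k1 k2" "x \<in> idx n"
  shows "Pf n h k1 k2 (sigma_inf_std n (Mf n h k1 k2 x)) = x"
proof -
  have m: "Mf n h k1 k2 x \<in> idx n" "Mf n h k1 k2 (Mf n h k1 k2 x) = x" using Mf_props[OF assms] by auto
  have n: "1 \<le> n" using assms(2) by (auto simp: idx_def)
  show ?thesis
  proof (cases "Mf n h k1 k2 x = 1")
    case True
    then have "x = Mf n h k1 k2 1" using m by simp
    also have "\<dots> = 2*n" using assms(1) by (simp add: Mf_def valid_triple_def)
    finally show ?thesis using True sinf_val[of 1 n] n by (simp add: Pf_def)
  next
    case False
    then show ?thesis using m sinf_val[of "Mf n h k1 k2 x" n] by (auto simp: Pf_def idx_def)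
  qed
qed



lemma transp_char:
  fixes F :: "nat \<Rightarrow> nat"
  assumes F: "F c0 = c1" "F c1 = c2" "F c2 = c3" "F c3 = c0"
    and dist: "distinct [c0,c1,c2,c3]" and uv: "u \<noteq> v"
    and Q: "\<And>x. transpose u v (F (transpose u v (F x))) = x"
  shows "transpose u v = transpose c0 c2 \<or> transpose u v = transpose c1 c3"
proof -
  have cov: "F x \<in> {u,v} \<or> F (F x) \<in> {u,v}" if "x \<in> {c0,c1,c2,c3}" for x
  proof (rule ccontr)
    assume "\<not> ?thesis"
    then have "transpose u v (F (transpose u v (F x))) = F (F x)" by (simp add: transpose_def)
    moreover have "F (F x) \<noteq> x" using that F dist by auto
    ultimately show False using Q by simp
  qed
  have c: "c1 \<in> {u,v} \<or> c2 \<in> {u,v}" "c2 \<in> {u,v} \<or> c3 \<in> {u,v}" "c3 \<in> {u,v} \<or> c0 \<in> {u,v}"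
     "c0 \<in> {u,v} \<or> c1 \<in> {u,v}"
    using cov[of c0] cov[of c1] cov[of c2] cov[of c3] unfolding F by simp_all
  have tr_eq: "transpose u v = transpose x y" if "x \<in> {u,v}" "y \<in> {u,v}" "x \<noteq> y" for x y
    using that by (auto simp: transpose_commute)
  have three: "False" if "x \<in> {u,v}" "y \<in> {u,v}" "z \<in> {u,v}" "x \<noteq> y" "y \<noteq> z" "x \<noteq> z" for x y z
    using that by auto
  show ?thesis
  proof (cases "c1 \<in> {u,v}")
    case True
    show ?thesis
    proof (cases "c3 \<in> {u,v}")
      case True
      then show ?thesis using tr_eq[of c1 c3] \<open>c1 \<in> {u,v}\<close> dist by simp
    next
      case False
      then have "c2 \<in> {u,v}" "c0 \<in> {u,v}" using c by auto
      then show ?thesis using three[of c0 c1 c2] True dist by simp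
    qed
  next
    case False
    then have "c0 \<in> {u,v}" "c2 \<in> {u,v}" using c by auto
    then show ?thesis using tr_eq[of c0 c2] dist by simp
  qed
qed


lemma tl_two: "tlist_prod [(a,b),(c,d)] x = transpose a b (transpose c d x)"
  by (simp add: tl_Cons)

lemma four_check:
  fixes P :: "nat \<Rightarrow> nat"
  assumes "distinct [g,h,k1,k2]" "P g = h" "P h = k1" "P k1 = k2" "P k2 = g" "x \<in> {h,k1,k2,g}"
  shows "transpose h k2 (P x) = transpose g k2 (transpose h k1 x) \<and>
     transpose k1 g (P x) = transpose g h (transpose k1 k2 x) \<and> transpose h k1 x \<in> {h,k1,k2,g}
     \<and> transpose g k2 (transpose h k1 x) \<in> {h,k1,k2,g} \<and> transpose g h (transpose k1 k2 x) \<in> {h,k1,k2,g}"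
  using assms by (auto simp: transpose_def)

lemma part2:
  assumes v: "valid_triple n h k1 k2"
  shows "let S = {T. special n T \<and> fst T = sigma0_form n h k1 k2 \<and>
                         (case T of (a, b, c, d) \<Rightarrow> pmul c d = s1tau_form n h k1 k2)}
             in card S = 2 \<and>
                (\<lambda>(a, b, c, d). d) ` S = {transpose h k2, transpose k1 (2*n - h)}"
proof -
  obtain a b c where e: "k1 = h + 2*a" "k2 = h + 2*a + 2*b" "2*n = h + 2*a + 2*b + 2*c + h"
    "1 \<le> a" "1 \<le> b" "1 \<le> c" "1 \<le> h" using vt_expand[OF v] by blast
  define s0f where "s0f = sigma0_form n h k1 k2"
  define F where "F = s1tau_form n h k1 k2"
  define d1 where "d1 = transpose h k2"
  define d2 where "d2 = transpose k1 (2*n-h)"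
  define tup where "tup = (\<lambda>d::nat\<Rightarrow>nat. (s0f, sigma_inf_std n, pmul F d, d))"
  define S where "S = {T. special n T \<and> fst T = s0f \<and> (case T of (a, b, c, d) \<Rightarrow> pmul c d = F)}"
  have Fx: "F x = Pf n h k1 k2 x" for x unfolding F_def using s1_pt[OF v] .
  note PC = Pf_C[OF v]
  have C_idx: "h \<in> idx n" "k1 \<in> idx n" "k2 \<in> idx n" "2*n-h \<in> idx n" using e by (auto simp: idx_def)
  have dC: "distinct [2*n-h, h, k1, k2]" using e by auto
  have n4: "4 \<le> n" using e by linarith
  have LPd: "distinct (flt (LT n h k1 k2))" and LPs: "set (flt (LT n h k1 k2)) \<subseteq> idx n"
    and LPl: "length (LT n h k1 k2) = n - 4"
    and LPc: "h \<notin> set (flt (LT n h k1 k2))" "k1 \<notin> set (flt (LT n h k1 k2))"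
      "k2 \<notin> set (flt (LT n h k1 k2))" "2*n-h \<notin> set (flt (LT n h k1 k2))"
    and LPv: "\<And>x. tlist_prod (LT n h k1 k2) x =
         (if 1 \<le> x \<and> x < 2*n \<and> x \<notin> {h,k1,k2,2*n-h} then Mf n h k1 k2 (x+1) else x)"
    using LT_props[OF v] by blast+
  have F2n: "F (2*n) = 2*n" using Fx by (simp add: Pf_def)
  have Fout: "F x = x" if "x \<notin> idx n" for x using that Fx by (auto simp: Pf_def idx_def)
  have tlLT: "tlist_prod (LT n h k1 k2) x = (if x \<in> {h,k1,k2,2*n-h} then x else F x)" for x
    using LPv Fx by (auto simp: Pf_def)
  have s0x: "s0f x = (if x \<in> idx n then Mf n h k1 k2 x else x)" for x
    unfolding s0f_def using s0_pt[OF v] .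
  have compid: "F (sigma_inf_std n (s0f x)) = x" for x
  proof (cases "x \<in> idx n")
    case True then show ?thesis using comp_id[OF v True] s0x Fx by simp
  next
    case False then show ?thesis using s0x sinf_out Fout by simp
  qed
  have disj_d: "disj_transp_prod (idx n) (n - 2) (pmul F d)"
    if "(d = d1 \<and> ys = [(2*n-h,k2),(h,k1)]) \<or> (d = d2 \<and> ys = [(2*n-h,h),(k1,k2)])" for d ys
  proof -
    have eq: "pmul F d = tlist_prod (LT n h k1 k2 @ ys)"
    proof
      fix x
      show "pmul F d x = tlist_prod (LT n h k1 k2 @ ys) x"
      proof (cases "x \<in> {h,k1,k2,2*n-h}")
        case True
        note fc = four_check[OF dC PC(4) PC(1) PC(2) PC(3) True]
        have "tlist_prod ys x \<in> {h,k1,k2,2*n-h}" using that fc by (elim disjE conjE) (simp_all only: tl_two)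
        then have "tlist_prod (LT n h k1 k2) (tlist_prod ys x) = tlist_prod ys x" using tlLT by simp
        moreover have "d (Pf n h k1 k2 x) = tlist_prod ys x" using that fc unfolding d1_def d2_def
          by (elim disjE conjE) (simp_all only: tl_two)
        ultimately show ?thesis unfolding pmul_def tl_append Fx by simp
      next
        case False
        then have "Pf n h k1 k2 x \<notin> {h,k1,k2,2*n-h}" using PC by blast
        then show ?thesis using that False tlLT unfolding pmul_def tl_append d1_def d2_def Fx
          by (auto simp: tl_two transpose_def)
      qed
    qed
    show ?thesis unfolding disj_transp_prod_def
    proof (intro exI conjI)
      show "length (LT n h k1 k2 @ ys) = n - 2" using LPl that n4 by auto
      have "distinct (flt (LT n h k1 k2 @ ys))"
        using LPd LPc that dC by auto
      then show "distinct (concat (map (\<lambda>(a, b). [a, b]) (LT n h k1 k2 @ ys)))"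
        by (simp only: flt_def)
      have "set (flt (LT n h k1 k2 @ ys)) \<subseteq> idx n"
        using LPs that C_idx by auto
      then show "set (concat (map (\<lambda>(a, b). [a, b]) (LT n h k1 k2 @ ys))) \<subseteq> idx n"
        by (simp only: flt_def)
    qed (fact eq)
  qed
  have spec: "special n (tup d)" if "d = d1 \<or> d = d2" for d
  proof -
    define ys where "ys = (if d = d1 then [(2*n-h,k2),(h,k1)] else [(2*n-h,h),(k1,k2)])"
    have ys: "(d = d1 \<and> ys = [(2*n-h,k2),(h,k1)]) \<or> (d = d2 \<and> ys = [(2*n-h,h),(k1,k2)])"
      using that unfolding ys_def by auto
    have "disj_transp_prod (idx n) n s0f" unfolding disj_transp_prod_def s0f_def sigma0_list
      using LS_props[OF v] unfolding flt_def by (intro exI[of _ "LS n h k1 k2"]) simp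
    moreover have "full_cycle (idx n) (sigma_inf_std n)" unfolding full_cycle_def sigma_inf_std_def
      by (rule exI[of _ "rev [1..<2*n+1]"]) (auto simp: idx_def)
    moreover have "is_transposition (idx n) d"
    proof (cases "d = d1")
      case True
      have "h \<noteq> k2" using dC by simp
      then show ?thesis using True C_idx unfolding d1_def is_transposition_def by blast
    next
      case False
      then have "d = d2" using that by blast
      moreover have "k1 \<noteq> 2*n-h" using dC by simp
      ultimately show ?thesis using C_idx unfolding d2_def is_transposition_def by blast
    qed
    moreover have "pmul (pmul (pmul s0f (sigma_inf_std n)) (pmul F d)) d = id"
    proof
      fix x
      have "d (d y) = y" for y using that unfolding d1_def d2_def by auto
      then show "pmul (pmul (pmul s0f (sigma_inf_std n)) (pmul F d)) d x = id x"
        using compid by (simp add: pmul_def)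
    qed
    moreover have "d (2*n) = 2*n" using that e unfolding d1_def d2_def by (auto simp: transpose_def)
    ultimately show ?thesis using disj_d[OF ys] e F2n
      unfolding special_def admissible_def tup_def by (auto simp: pmul_def)
  qed
  have sub: "S \<subseteq> tup ` {d1, d2}"
  proof
    fix T assume "T \<in> S"
    then obtain a0 b0 c0 d0 where T: "T = (a0,b0,c0,d0)" and sp: "special n (a0,b0,c0,d0)"
      and a0: "a0 = s0f" and cd: "pmul c0 d0 = F"
      unfolding S_def by (cases T) auto
    from sp have b0: "b0 = sigma_inf_std n" and tr: "is_transposition (idx n) d0"
      and dc0: "disj_transp_prod (idx n) (n - 2) c0"
      unfolding special_def admissible_def by auto
    obtain u v where uv: "u \<noteq> v" "d0 = transpose u v" using tr unfolding is_transposition_def by auto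
    obtain ps where ps: "distinct (flt ps)" "c0 = tlist_prod ps"
      using dc0 unfolding disj_transp_prod_def flt_def by auto
    have c0inv: "c0 (c0 x) = x" for x using ps tl_invol by simp
    have dd: "d0 (d0 x) = x" for x using uv by simp
    have c0F: "c0 x = d0 (F x)" for x
    proof -
      have "F x = d0 (c0 x)" using cd by (auto simp: pmul_def)
      then show ?thesis using dd by simp
    qed
    have Q: "transpose u v (Pf n h k1 k2 (transpose u v (Pf n h k1 k2 x))) = x" for x
      using c0inv[of x] c0F uv(2) Fx by simp
    have "transpose u v = transpose (2*n-h) k1 \<or> transpose u v = transpose h k2"
      by (rule transp_char[OF PC(4) PC(1) PC(2) PC(3) dC uv(1) Q])
    then have "d0 = d1 \<or> d0 = d2" using uv unfolding d1_def d2_def by (auto simp: transpose_commute)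
    moreover have "c0 = pmul F d0" using c0F by (auto simp: pmul_def)
    ultimately show "T \<in> tup ` {d1, d2}" using T a0 b0 unfolding tup_def by auto
  qed
  have Seq: "S = tup ` {d1, d2}"
  proof
    have pp: "pmul (pmul F d) d = F" if "d = d1 \<or> d = d2" for d
      using that unfolding d1_def d2_def by (auto simp: pmul_def fun_eq_iff)
    show "tup ` {d1, d2} \<subseteq> S" using spec pp unfolding S_def tup_def by auto
  qed (fact sub)
  have d12: "d1 \<noteq> d2"
  proof
    assume "d1 = d2"
    then have "d1 h = d2 h" by simp
    then show False using dC unfolding d1_def d2_def by (auto simp: transpose_def)
  qed
  have inj: "inj_on tup {d1, d2}" unfolding tup_def inj_on_def by auto
  have "card S = 2" unfolding Seq using card_image[OF inj] d12 by simp
  moreover have "(\<lambda>(a, b, c, d). d) ` S = {d1, d2}" unfolding Seq tup_def by auto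
  ultimately show ?thesis unfolding S_def s0f_def F_def d1_def d2_def Let_def by simp
qed



lemma part1:
  assumes sp: "special n (s0, sinf, s1, t)" and tc: "transp_and_4cycle (idx n) n (pmul s1 t)"
  shows "\<exists>h k1 k2. valid_triple n h k1 k2 \<and>
            s0 = sigma0_form n h k1 k2 \<and> pmul s1 t = s1tau_form n h k1 k2 \<and>
            {x \<in> idx n. pmul s1 t x = x} =
              {2*n, (k1 + h) div 2, (k1 + k2) div 2, (2*n - h + k2) div 2}"
proof -
  define P where "P = pmul s1 t"
  define M where "M = s0"
  from sp have n2: "2 \<le> n" and dt0: "disj_transp_prod (idx n) n s0"
    and prod: "pmul (pmul (pmul s0 sinf) s1) t = id" and sinf: "sinf = sigma_inf_std n"
    and s12: "s1 (2*n) = 2*n" and t2: "t (2*n) = 2*n"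
    unfolding special_def admissible_def by auto
  have n2i: "2*n \<in> idx n" "1 \<in> idx n" using n2 by (auto simp: idx_def)
  obtain ps where ps: "length ps = n" "distinct (flt ps)" "set (flt ps) \<subseteq> idx n" "s0 = tlist_prod ps"
    using dt0 unfolding disj_transp_prod_def flt_def[symmetric] by auto
  have "card (set (flt ps)) = card (idx n)" using ps(1,2) distinct_card[OF ps(2)] by (simp add: idx_def)
  then have sfl: "set (flt ps) = idx n" using ps(3) by (intro card_subset_eq) (auto simp: idx_def)
  have Mi: "M x \<in> idx n \<and> M x \<noteq> x \<and> M (M x) = x" if "x \<in> idx n" for x
    using tl_in[OF ps(2), of x] that sfl ps(4) unfolding M_def by simp
  have Mo: "M x = x" if "x \<notin> idx n" for x
    using tl_out[of x ps] that sfl ps(4) unfolding M_def by simp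
  have PM: "P (sinf (M x)) = x" for x
    using fun_cong[OF prod, of x] unfolding P_def M_def by (simp add: pmul_def)
  have P1: "P y = M (y+1)" if "1 \<le> y" "y < 2*n" for y
  proof -
    have "y+1 \<in> idx n" using that by (simp add: idx_def)
    then have "M (M (y+1)) = y+1" using Mi by blast
    moreover have "sinf (y+1) = y" unfolding sinf using sinf_val[of "y+1" n] that by simp
    ultimately show ?thesis using PM[of "M (y+1)"] by simp
  qed
  have P2n: "P (2*n) = 2*n" unfolding P_def pmul_def using s12 t2 by simp
  have M1: "M 1 = 2*n"
  proof -
    have "M (M 1) = 1" using Mi n2i by blast
    moreover have "sinf 1 = 2*n" unfolding sinf using sinf_val[of 1 n] n2 by simp
    ultimately show ?thesis using PM[of "M 1"] P2n by simp
  qed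
  have M2n: "M (2*n) = 1" using Mi[OF n2i(2)] M1 by simp
  obtain qs a b c e where qs: "distinct (flt qs @ [a,b,c,e])" "set (flt qs @ [a,b,c,e]) \<subseteq> idx n"
    "P = pmul (tlist_prod qs) (cycle_of_list [a,b,c,e])"
    using tc unfolding transp_and_4cycle_def flt_def[symmetric] P_def by blast
  have dC: "distinct [a,b,c,e]" using qs(1) by simp
  have dq: "distinct (flt qs)" using qs(1) by simp
  define C where "C = {a,b,c,e}"
  have Cq: "x \<notin> set (flt qs)" if "x \<in> C" for x using qs(1) that unfolding C_def by auto
  have Pval: "P x = cycle_of_list [a,b,c,e] (tlist_prod qs x)" for x using qs(3) by (simp add: pmul_def)
  have Pa: "P a = b" "P b = c" "P c = e" "P e = a"
    using Pval tl_out Cq cyc4[OF dC] unfolding C_def by auto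
  have notC: "P y \<notin> C \<and> P (P y) = y" if "y \<notin> C" for y
  proof (cases "y \<in> set (flt qs)")
    case True
    have t: "tlist_prod qs y \<in> set (flt qs)" "tlist_prod qs (tlist_prod qs y) = y" using tl_in[OF dq True] by auto
    then have "tlist_prod qs y \<notin> C" using qs(1) unfolding C_def by auto
    then have "P y = tlist_prod qs y" using Pval cyc4(5)[OF dC] unfolding C_def by auto
    then show ?thesis using \<open>tlist_prod qs y \<notin> C\<close> t Pval cyc4(5)[OF dC] that unfolding C_def by auto
  next
    case False
    then have "P y = y" using Pval tl_out cyc4(5)[OF dC] that unfolding C_def by auto
    then show ?thesis using that by simp
  qed
  have Cidx: "C \<subseteq> idx n" using qs(2) unfolding C_def by auto
  have Pout: "P x = x" if "x \<notin> idx n" for x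
  proof -
    have "x \<notin> C" using that Cidx by auto
    moreover have "x \<notin> set (flt qs)" using that qs(2) by auto
    ultimately show ?thesis using Pval tl_out cyc4(5)[OF dC] unfolding C_def by auto
  qed
  have PC: "P x \<in> C" "P x \<noteq> x" "P (P x) \<noteq> x" "P (P (P x)) \<noteq> x" if "x \<in> C" for x
    using that Pa dC unfolding C_def by auto
  have Pinj: "x = y" if "x \<in> C" "y \<in> C" "P x = P y" for x y
    using that Pa dC unfolding C_def by auto
  have Psurj: "\<exists>x\<in>C. P x = y" if "y \<in> C" for y
    using that Pa unfolding C_def by auto
  have C2n: "x \<noteq> 2*n" "1 \<le> x" "x < 2*n" if "x \<in> C" for x
  proof -
    show "x \<noteq> 2*n" using PC(2)[OF that] P2n by auto
    then show "1 \<le> x" "x < 2*n" using Cidx that by (auto simp: idx_def)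
  qed
  have K: "M y = M (y+1) + 1" if "1 \<le> y" "y < 2*n" "y \<notin> C" for y
  proof -
    define z where "z = P y"
    have z: "z = M (y+1)" using P1 that z_def by simp
    have zi: "z \<in> idx n" using z Mi[of "y+1"] that by (simp add: idx_def)
    have Pz: "P z = y" using notC that z_def by simp
    have "z \<noteq> 2*n" using Pz P2n that by auto
    then have "P z = M (z+1)" using zi P1 by (simp add: idx_def)
    then have "M (z+1) = y" using Pz by simp
    then have "M y = z + 1" using Mi[of "z+1"] zi \<open>z \<noteq> 2*n\<close> by (auto simp: idx_def)
    then show ?thesis using z by simp
  qed
  have KC: "P y = M (y+1)" if "y \<in> C" for y using P1 C2n that by simp
  have finC: "finite C" "C \<noteq> {}" unfolding C_def by auto
  define h where "h = Min C"
  define g where "g = Max C"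
  have hC: "h \<in> C" "\<And>x. x \<in> C \<Longrightarrow> h \<le> x" using finC unfolding h_def by auto
  have gC: "g \<in> C" "\<And>x. x \<in> C \<Longrightarrow> x \<le> g" using finC unfolding g_def by auto
  have h1: "1 \<le> h" "h < 2*n" using C2n hC by auto
  have g1: "1 \<le> g" "g < 2*n" using C2n gC by auto
  have Low: "M y = 2*n+1-y" if "1 \<le> y" "y \<le> h" for y
    using that
  proof (induction y)
    case 0 then show ?case by simp
  next
    case (Suc y)
    show ?case
    proof (cases "y = 0")
      case True then show ?thesis using M1 by simp
    next
      case False
      then have y: "1 \<le> y" "y < h" using Suc.prems by auto
      have "y \<notin> C" using y hC by force
      then have "M y = M (y+1) + 1" using K y h1 by simp
      then show ?thesis using Suc.IH y by simp
    qed
  qed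
  have High: "M (2*n - d) = d + 1" if "d < 2*n - g" for d
    using that
  proof (induction d)
    case 0 then show ?case using M2n by simp
  next
    case (Suc d)
    define y where "y = 2*n - Suc d"
    have y: "g < y" "1 \<le> y" "y < 2*n" "y + 1 = 2*n - d" using Suc.prems g1 unfolding y_def by auto
    have "y \<notin> C" using y gC by force
    then have "M y = M (y+1) + 1" using K y by simp
    then show ?case using Suc.IH Suc.prems y unfolding y_def by simp
  qed
  have HighM: "M y = 2*n+1-y" if "g < y" "y \<le> 2*n" for y
    using High[of "2*n-y"] that by simp
  have gh: "g = 2*n - h"
  proof (rule ccontr)
    assume "g \<noteq> 2*n - h"
    then consider "g < 2*n - h" | "2*n - h < g" by linarith
    then show False
    proof cases
      case 1
      have "M (2*n-h) = h+1" using HighM[of "2*n-h"] 1 h1 by simp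
      then have "M (h+1) = 2*n-h" using Mi[of "2*n-h"] h1 by (auto simp: idx_def)
      then have "P h = 2*n-h" using KC hC by simp
      then have "2*n-h \<le> g" using gC PC(1)[OF hC(1)] by metis
      then show False using 1 by simp
    next
      case 2
      have "M (2*n+1-g) = g" using Low[of "2*n+1-g"] 2 g1 by simp
      moreover have "2*n+1-g \<in> idx n" using g1 unfolding idx_def by auto
      ultimately have Mg: "M g = 2*n+1-g" using Mi[of "2*n+1-g"] by metis
      obtain x where x: "x \<in> C" "P x = g" using Psurj gC by blast
      then have "M (x+1) = g" using KC by simp
      then have "x + 1 = M g" using Mi[of "x+1"] C2n[OF x(1)] by (auto simp: idx_def)
      then have "x < h" using Mg 2 g1 by simp
      then show False using hC(2)[OF x(1)] by simp
    qed
  qed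
  have Pg: "P g = h"
  proof -
    have "P g = M (g+1)" using KC gC by simp
    also have "\<dots> = h" using HighM[of "g+1"] gh h1 by simp
    finally show ?thesis .
  qed
  have cardC: "card C = 4" unfolding C_def using dC by simp
  have hg: "h < g"
  proof -
    have "h \<le> g" using hC gC by blast
    moreover have "h \<noteq> g"
    proof
      assume "h = g"
      then have "C \<subseteq> {h}" using hC gC by force
      then have "card C \<le> 1" using card_mono[of "{h}" C] by simp
      then show False using cardC by simp
    qed
    ultimately show ?thesis by simp
  qed
  have "card (C - {h, g}) = 2" using cardC hC gC hg finC by (simp add: card_Diff_subset)
  then obtain u v where uv: "C - {h,g} = {u,v}" "u \<noteq> v" by (auto simp: card_2_iff)
  define k1 where "k1 = min u v"
  define k2 where "k2 = max u v"
  have kk: "C - {h,g} = {k1,k2}" "k1 < k2" using uv unfolding k1_def k2_def by (auto simp: min_def max_def)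
  have Ceq: "C = {h,k1,k2,g}" using kk(1) hC gC by blast
  have k1C: "k1 \<in> C" "k2 \<in> C" using Ceq by auto
  have ord: "h < k1" "k2 < g"
  proof -
    have "k1 \<noteq> h" "k2 \<noteq> g" using kk(1) by blast+
    then show "h < k1" "k2 < g" using hC(2)[OF k1C(1)] gC(2)[OF k1C(2)] by auto
  qed
  have k1g: "k1 \<noteq> g" "k2 \<noteq> h" using ord kk by auto
  have arc: "M y + y = M (p+1) + p + 1" if "p < q" "q \<le> 2*n" "\<forall>y. p < y \<and> y < q \<longrightarrow> y \<notin> C"
     "p+1 \<le> y" "y \<le> q" for p q y
  proof -
    have "\<forall>j. p+1+j \<le> q \<longrightarrow> M (p+1+j) + (p+1+j) = M (p+1) + p + 1"
    proof
      fix j show "p+1+j \<le> q \<longrightarrow> M (p+1+j) + (p+1+j) = M (p+1) + p + 1"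
      proof (induction j)
        case 0 then show ?case by simp
      next
        case (Suc j)
        show ?case
        proof
          assume a: "p + 1 + Suc j \<le> q"
          have "p+1+j \<notin> C" using that(3) a by auto
          then have "M (p+1+j) = M (p+1+j+1) + 1" using K a that(2) by simp
          then show "M (p + 1 + Suc j) + (p + 1 + Suc j) = M (p + 1) + p + 1" using Suc.IH a by simp
        qed
      qed
    qed
    note B = this[rule_format, of "y-(p+1)"]
    have c: "p+1+(y-(p+1)) = y" using that(4) by simp
    show ?thesis using B that(5) unfolding c by simp
  qed
  have betw: "\<forall>y. p < y \<and> y < q \<longrightarrow> y \<notin> C" if "(p = h \<and> q = k1) \<or> (p = k1 \<and> q = k2) \<or> (p = k2 \<and> q = g)"
    for p q using that Ceq ord kk(2) by auto
  have Ph: "P h = k1 \<and> P k1 = k2 \<and> P k2 = g"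
  proof -
    have Ph_in: "P h \<in> {k1,k2}"
    proof -
      have "P h \<in> C" "P h \<noteq> h" using PC hC by auto
      moreover have "P h \<noteq> g" using PC(3)[OF hC(1)] Pg by auto
      ultimately show ?thesis using Ceq by auto
    qed
    have Mh: "M (h+1) = P h" using KC hC by simp
    have not_k2: "P h \<noteq> k2"
    proof
      assume a: "P h = k2"
      have "P k2 \<in> C" "P k2 \<noteq> k2" using PC k1C by auto
      moreover have "P k2 \<noteq> h" using Pinj[of k2 g] k1C gC Pg k1g ord by auto
      moreover have "P k2 \<noteq> g" using PC(4)[OF hC(1)] a Pg by auto
      ultimately have "P k2 = k1" using Ceq by auto
      then have Mk2: "M (k2+1) = k1" using KC k1C by simp
      have "M k1 + k1 = M (h+1) + h + 1" using arc[of h k1 k1] betw[of h k1] ord g1 kk(2) by simp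
      then have "M k1 + k1 = k2 + h + 1" using Mh a by simp
      moreover have "M k1 = k2 + 1" using Mi[of "k2+1"] Mk2 ord g1 by (auto simp: idx_def)
      ultimately show False using ord by simp
    qed
    then have P1': "P h = k1" using Ph_in by auto
    have P2': "P k1 = k2"
    proof -
      have "P k1 \<in> C" "P k1 \<noteq> k1" using PC k1C by auto
      moreover have "P k1 \<noteq> h" using Pinj[of k1 g] k1C gC Pg k1g by auto
      moreover have "P k1 \<noteq> g" using PC(4)[OF hC(1)] P1' Pg by auto
      ultimately show ?thesis using Ceq by auto
    qed
    have P3': "P k2 = g"
    proof -
      have "P k2 \<in> C" "P k2 \<noteq> k2" using PC k1C by auto
      moreover have "P k2 \<noteq> h" using Pinj[of k2 g] k1C gC Pg k1g ord by auto
      moreover have "P k2 \<noteq> k1" using Pinj[of k2 h] k1C hC P1' k1g by auto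
      ultimately show ?thesis using Ceq by auto
    qed
    show ?thesis using P1' P2' P3' by simp
  qed
  have MP: "M (h+1) = k1" "M (k1+1) = k2" "M (k2+1) = g" using Ph KC hC k1C by auto
  have A1: "M y + y = k1 + h + 1" if "h+1 \<le> y" "y \<le> k1" for y
    using arc[of h k1 y] betw[of h k1] ord kk(2) g1 that MP by simp
  have A2: "M y + y = k2 + k1 + 1" if "k1+1 \<le> y" "y \<le> k2" for y
    using arc[of k1 k2 y] betw[of k1 k2] ord kk(2) g1 that MP by simp
  have A3: "M y + y = g + k2 + 1" if "k2+1 \<le> y" "y \<le> g" for y
    using arc[of k2 g y] betw[of k2 g] ord kk(2) g1 that MP by simp
  have par1: "h mod 2 = k1 mod 2"
  proof (rule ccontr)
    assume "h mod 2 \<noteq> k1 mod 2"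
    then have "\<exists>y. 2*y = h + k1 + 1 \<and> h+1 \<le> y \<and> y \<le> k1" using ord(1) by presburger
    then obtain y where y: "2*y = h + k1 + 1" "h+1 \<le> y" "y \<le> k1" by blast
    then have "M y = y" using A1[of y] by simp
    moreover have "y \<in> idx n" using y ord kk(2) g1 by (simp add: idx_def)
    ultimately show False using Mi by blast
  qed
  have par2: "k1 mod 2 = k2 mod 2"
  proof (rule ccontr)
    assume "k1 mod 2 \<noteq> k2 mod 2"
    then have "\<exists>y. 2*y = k1 + k2 + 1 \<and> k1+1 \<le> y \<and> y \<le> k2" using kk(2) by presburger
    then obtain y where y: "2*y = k1 + k2 + 1" "k1+1 \<le> y" "y \<le> k2" by blast
    then have "M y = y" using A2[of y] by simp
    moreover have "y \<in> idx n" using y ord kk(2) g1 by (simp add: idx_def)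
    ultimately show False using Mi by blast
  qed
  have vt: "valid_triple n h k1 k2" unfolding valid_triple_def using h1 ord kk(2) gh par1 par2 by simp
  have MMf: "M x = Mf n h k1 k2 x" if "x \<in> idx n" for x
  proof -
    have x: "1 \<le> x" "x \<le> 2*n" using that by (auto simp: idx_def)
    consider "x \<le> h" | "g < x" | "h < x" "x \<le> k1" | "k1 < x" "x \<le> k2" | "k2 < x" "x \<le> g" by linarith
    then show ?thesis
    proof cases
      case 1 then show ?thesis using Low[of x] x by (simp add: Mf_def)
    next
      case 2 then show ?thesis using HighM[of x] x gh by (simp add: Mf_def)
    next
      case 3 then show ?thesis using A1[of x] gh ord kk(2) by (auto simp: Mf_def)
    next
      case 4 then show ?thesis using A2[of x] gh ord kk(2) by (auto simp: Mf_def)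
    next
      case 5 then show ?thesis using A3[of x] gh ord kk(2) by (auto simp: Mf_def)
    qed
  qed
  have s0eq: "s0 = sigma0_form n h k1 k2"
  proof
    fix x show "s0 x = sigma0_form n h k1 k2 x"
      using s0_pt[OF vt, of x] MMf Mo unfolding M_def by auto
  qed
  have Peq: "P = s1tau_form n h k1 k2"
  proof
    fix x
    have "P x = Pf n h k1 k2 x"
    proof (cases "1 \<le> x \<and> x < 2*n")
      case True
      then have "x + 1 \<in> idx n" by (simp add: idx_def)
      then show ?thesis using True P1 MMf by (simp add: Pf_def)
    next
      case False
      then have "x = 2*n \<or> x \<notin> idx n" by (auto simp: idx_def)
      then show ?thesis using False P2n Pout by (auto simp: Pf_def)
    qed
    then show "P x = s1tau_form n h k1 k2 x" using s1_pt[OF vt] by simp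
  qed
  have "{x \<in> idx n. P x = x} = {2*n, (k1 + h) div 2, (k1 + k2) div 2, (2*n - h + k2) div 2}"
    using fixset[OF vt] Peq s1_pt[OF vt] by simp
  then show ?thesis using vt s0eq Peq unfolding P_def by blast
qed


theorem mainTheorem16:
  fixes n :: nat and s0 sinf s1 t :: "nat \<Rightarrow> nat"
  assumes "special n (s0, sinf, s1, t)"
    and "transp_and_4cycle (idx n) n (pmul s1 t)"
  shows "(\<exists>h k1 k2. valid_triple n h k1 k2 \<and>
            s0 = sigma0_form n h k1 k2 \<and> pmul s1 t = s1tau_form n h k1 k2 \<and>
            {x \<in> idx n. pmul s1 t x = x} =
              {2*n, (k1 + h) div 2, (k1 + k2) div 2, (2*n - h + k2) div 2})
       \<and> (\<forall>h k1 k2. valid_triple n h k1 k2 \<longrightarrow>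
            (let S = {T. special n T \<and> fst T = sigma0_form n h k1 k2 \<and>
                         (case T of (a, b, c, d) \<Rightarrow> pmul c d = s1tau_form n h k1 k2)}
             in card S = 2 \<and>
                (\<lambda>(a, b, c, d). d) ` S = {transpose h k2, transpose k1 (2*n - h)}))"
proof (intro conjI allI impI)
  show "\<exists>h k1 k2. valid_triple n h k1 k2 \<and>
            s0 = sigma0_form n h k1 k2 \<and> pmul s1 t = s1tau_form n h k1 k2 \<and>
            {x \<in> idx n. pmul s1 t x = x} =
              {2*n, (k1 + h) div 2, (k1 + k2) div 2, (2*n - h + k2) div 2}"
    by (rule part1[OF assms])
next
  fix h k1 k2 assume "valid_triple n h k1 k2"
  then show "let S = {T. special n T \<and> fst T = sigma0_form n h k1 k2 \<and>
                         (case T of (a, b, c, d) \<Rightarrow> pmul c d = s1tau_form n h k1 k2)}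
             in card S = 2 \<and>
                (\<lambda>(a, b, c, d). d) ` S = {transpose h k2, transpose k1 (2*n - h)}"
    by (rule part2)
qed

end
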